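(* For integers $n \ge m > 1$, $\det'(K_{n,m}) = n-1$ if $n \neq m$, and $\det'(K_{n,m}) = n$ if $n = m$.
   Context: $K_{n,m}$ is the complete bipartite graph with parts of sizes $n$ and $m$. For a graph $G$ with at most one isolated vertex and no component isomorphic to $K_2$, an edge subset $T$ is an edge determining set if the only automorphism $\phi$ of $G$ satisfying $\{\phi(u),\phi(v)\}=\{u,v\}$ for all $\{u,v\}\in T$ is the identity; the determining index $\det'(G)$ is the minimum size of an edge determining set. *)

theory Defs
  imports Main
begin

definition graph_automorphism :: "'a set \<Rightarrow> 'a set set \<Rightarrow> ('a \<Rightarrow> 'a) \<Rightarrow> bool" where
  "graph_automorphism V E \<phi> \<longleftrightarrow>
     bij_betw \<phi> V V \<and> (\<forall>u\<in>V. \<forall>v\<in>V. ({u, v} \<in> E \<longleftrightarrow> {\<phi> u, \<phi> v} \<in> E))"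

definition edge_determining_set :: "'a set \<Rightarrow> 'a set set \<Rightarrow> 'a set set \<Rightarrow> bool" where
  "edge_determining_set V E T \<longleftrightarrow> T \<subseteq> E \<and>
     (\<forall>\<phi>. graph_automorphism V E \<phi> \<and>
           (\<forall>u v. {u, v} \<in> T \<longrightarrow> {\<phi> u, \<phi> v} = {u, v})
           \<longrightarrow> (\<forall>x\<in>V. \<phi> x = x))"

definition determining_index :: "'a set \<Rightarrow> 'a set set \<Rightarrow> nat" where
  "determining_index V E =
     (LEAST k. \<exists>T. edge_determining_set V E T \<and> finite T \<and> card T = k)"

definition Knm_vertices :: "nat \<Rightarrow> nat \<Rightarrow> (nat + nat) set" where
  "Knm_vertices n m = Inl ` {..<n} \<union> Inr ` {..<m}"

definition Knm_edges :: "nat \<Rightarrow> nat \<Rightarrow> (nat + nat) set set" where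
  "Knm_edges n m = {{Inl i, Inr j} | i j. i < n \<and> j < m}"

end

theory Submission
  imports Defs
begin

lemma mem_V: "x \<in> Knm_vertices n m \<longleftrightarrow> (case x of Inl i \<Rightarrow> i < n | Inr j \<Rightarrow> j < m)"
  by (cases x) (auto simp: Knm_vertices_def)

lemma edge_mem: "{Inl i, Inr j} \<in> Knm_edges n m \<longleftrightarrow> i < n \<and> j < m"
  by (auto simp: Knm_edges_def doubleton_eq_iff)

lemma E_char:
  assumes "u \<in> Knm_vertices n m" "v \<in> Knm_vertices n m"
  shows "{u,v} \<in> Knm_edges n m \<longleftrightarrow> isl u \<noteq> isl v"
  using assms
  by (cases u; cases v) (auto simp: mem_V Knm_edges_def doubleton_eq_iff insert_commute)

lemma invol_bij: "(\<forall>x\<in>A. \<phi> x \<in> A \<and> \<phi> (\<phi> x) = x) \<Longrightarrow> bij_betw \<phi> A A"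
  unfolding bij_betw_def inj_on_def by (metis image_subset_iff subsetI subset_antisym image_eqI)

lemma auto_intro:
  assumes "bij_betw \<phi> (Knm_vertices n m) (Knm_vertices n m)"
    and "\<forall>u\<in>Knm_vertices n m. \<forall>v\<in>Knm_vertices n m. (isl (\<phi> u) = isl (\<phi> v)) = (isl u = isl v)"
  shows "graph_automorphism (Knm_vertices n m) (Knm_edges n m) \<phi>"
proof -
  have "\<phi> u \<in> Knm_vertices n m" if "u \<in> Knm_vertices n m" for u
    using assms(1) that bij_betwE by blast
  then show ?thesis using assms unfolding graph_automorphism_def
    by (simp add: E_char)
qed

lemma auto_side:
  assumes "graph_automorphism (Knm_vertices n m) (Knm_edges n m) \<phi>"
    "u \<in> Knm_vertices n m" "v \<in> Knm_vertices n m"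
  shows "(isl (\<phi> u) = isl (\<phi> v)) = (isl u = isl v)"
proof -
  have "\<phi> u \<in> Knm_vertices n m" "\<phi> v \<in> Knm_vertices n m"
    using assms bij_betwE unfolding graph_automorphism_def by blast+
  then show ?thesis using assms unfolding graph_automorphism_def
    by (metis E_char)
qed

lemma side_cases:
  assumes aut: "graph_automorphism (Knm_vertices n m) (Knm_edges n m) \<phi>"
    and "m \<le> n" "0 < n"
  shows "(\<forall>u\<in>Knm_vertices n m. isl (\<phi> u) = isl u) \<or>
         (n = m \<and> (\<forall>u\<in>Knm_vertices n m. isl (\<phi> u) \<noteq> isl u))"
proof -
  have u0: "Inl 0 \<in> Knm_vertices n m" using assms by (simp add: mem_V)
  show ?thesis
  proof (cases "isl (\<phi> (Inl 0))")
    case True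
    then show ?thesis using auto_side[OF aut _ u0] by auto
  next
    case False
    then have fl: "\<forall>u\<in>Knm_vertices n m. isl (\<phi> u) \<noteq> isl u"
      using auto_side[OF aut _ u0] by auto
    have inj: "inj_on \<phi> (Inl ` {..<n})"
      using aut unfolding graph_automorphism_def bij_betw_def
      by (rule inj_on_subset[OF conjunct1[OF conjunct1]]) (auto simp: Knm_vertices_def)
    have sub: "\<phi> ` (Inl ` {..<n}) \<subseteq> Inr ` {..<m}"
    proof
      fix y assume "y \<in> \<phi> ` (Inl ` {..<n})"
      then obtain i where i: "i < n" "y = \<phi> (Inl i)" by auto
      have iv: "Inl i \<in> Knm_vertices n m" using i by (simp add: mem_V)
      then have "y \<in> Knm_vertices n m" using aut i unfolding graph_automorphism_def
        using bij_betwE by blast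
      moreover have "\<not> isl y" using fl iv i by auto
      ultimately show "y \<in> Inr ` {..<m}" by (cases y) (auto simp: mem_V)
    qed
    have "card (Inl ` {..<n} :: (nat+nat) set) \<le> card (Inr ` {..<m} :: (nat+nat) set)"
      using card_inj_on_le[OF inj sub] by simp
    then have "n \<le> m" by (simp add: card_image)
    then show ?thesis using assms fl by auto
  qed
qed

lemma swap_left:
  assumes det: "edge_determining_set (Knm_vertices n m) (Knm_edges n m) T"
    and ab: "a < n" "b < n" "a \<noteq> b"
    and miss: "\<forall>e\<in>T. Inl a \<notin> e \<and> Inl b \<notin> e"
  shows False
proof -
  define \<phi> :: "nat+nat \<Rightarrow> nat+nat" where
    "\<phi> = (\<lambda>x. if x = Inl a then Inl b else if x = Inl b then Inl a else x)"
  have bij: "bij_betw \<phi> (Knm_vertices n m) (Knm_vertices n m)"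
    by (rule invol_bij) (auto simp: \<phi>_def mem_V ab)
  have "graph_automorphism (Knm_vertices n m) (Knm_edges n m) \<phi>"
    by (rule auto_intro[OF bij]) (auto simp: \<phi>_def)
  moreover have "\<forall>u v. {u, v} \<in> T \<longrightarrow> {\<phi> u, \<phi> v} = {u, v}"
    using miss by (auto simp: \<phi>_def)
  ultimately have "\<forall>x\<in>Knm_vertices n m. \<phi> x = x"
    using det unfolding edge_determining_set_def by blast
  moreover have "Inl a \<in> Knm_vertices n m" using ab by (simp add: mem_V)
  ultimately show False using ab by (auto simp: \<phi>_def)
qed

lemma swap_right:
  assumes det: "edge_determining_set (Knm_vertices n m) (Knm_edges n m) T"
    and ab: "a < m" "b < m" "a \<noteq> b"
    and miss: "\<forall>e\<in>T. Inr a \<notin> e \<and> Inr b \<notin> e"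
  shows False
proof -
  define \<phi> :: "nat+nat \<Rightarrow> nat+nat" where
    "\<phi> = (\<lambda>x. if x = Inr a then Inr b else if x = Inr b then Inr a else x)"
  have bij: "bij_betw \<phi> (Knm_vertices n m) (Knm_vertices n m)"
    by (rule invol_bij) (auto simp: \<phi>_def mem_V ab)
  have "graph_automorphism (Knm_vertices n m) (Knm_edges n m) \<phi>"
    by (rule auto_intro[OF bij]) (auto simp: \<phi>_def)
  moreover have "\<forall>u v. {u, v} \<in> T \<longrightarrow> {\<phi> u, \<phi> v} = {u, v}"
    using miss by (auto simp: \<phi>_def)
  ultimately have "\<forall>x\<in>Knm_vertices n m. \<phi> x = x"
    using det unfolding edge_determining_set_def by blast
  moreover have "Inr a \<in> Knm_vertices n m" using ab by (simp add: mem_V)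
  ultimately show False using ab by (auto simp: \<phi>_def)
qed

lemma two_missing:
  assumes "A \<subseteq> {..<n}" "card A + 2 \<le> (n::nat)"
  shows "\<exists>a b. a < n \<and> b < n \<and> a \<noteq> b \<and> a \<notin> A \<and> b \<notin> A"
proof -
  have "card ({..<n} - A) \<ge> 2"
    using assms by (simp add: card_Diff_subset finite_subset)
  then obtain a b where "a \<in> {..<n} - A" "b \<in> {..<n} - A" "a \<noteq> b"
    by (metis card_2_iff' card_gt_0_iff[of "{..<n} - A"] 
        One_nat_def Suc_1 Suc_le_eq card_le_Suc0_iff_eq finite_Diff finite_lessThan not_less_eq_eq)
  then show ?thesis by blast
qed

lemma one_missing:
  assumes "A \<subseteq> {..<n}" "card A + 1 = (n::nat)"
  shows "\<exists>a<n. a \<notin> A \<and> (\<forall>x<n. x \<noteq> a \<longrightarrow> x \<in> A)"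
proof -
  have "card ({..<n} - A) = 1"
    using assms by (simp add: card_Diff_subset finite_subset)
  then obtain a where "{..<n} - A = {a}" using card_1_singletonE by blast
  then show ?thesis by auto
qed

lemma flip_case:
  assumes det: "edge_determining_set (Knm_vertices n n) (Knm_edges n n) T"
    and Pdef: "P = {(i,j). {Inl i, Inr j} \<in> T}"
    and injf: "inj_on fst P" and injs: "inj_on snd P"
    and a: "a < n" "fst ` P = {..<n} - {a}"
    and b: "b < n" "snd ` P = {..<n} - {b}"
  shows False
proof -
  have TE: "T \<subseteq> Knm_edges n n" using det by (simp add: edge_determining_set_def)
  have Tform: "\<exists>i j. (i,j) \<in> P \<and> e = {Inl i, Inr j}" if "e \<in> T" for e
    using that TE Pdef unfolding Knm_edges_def by blast
  have Pbd: "i < n \<and> j < n" if "(i,j) \<in> P" for i j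
    using that Pdef TE edge_mem by blast
  define f where "f i = (if i = a then b else snd (the_inv_into P fst i))" for i
  define g where "g j = (if j = b then a else fst (the_inv_into P snd j))" for j
  have fg: "f i = j \<and> g j = i" if "(i,j) \<in> P" for i j
  proof -
    have "i \<noteq> a" using that a by force
    moreover have "j \<noteq> b" using that b by force
    moreover have "the_inv_into P fst i = (i,j)"
      using the_inv_into_f_eq[OF injf _ that] by simp
    moreover have "the_inv_into P snd j = (i,j)"
      using the_inv_into_f_eq[OF injs _ that] by simp
    ultimately show ?thesis by (simp add: f_def g_def)
  qed
  have f1: "f i < n \<and> g (f i) = i" if "i < n" for i
  proof (cases "i = a")
    case True then show ?thesis using b by (simp add: f_def g_def)
  next
    case False
    then have "i \<in> fst ` P" using a that by auto
    then obtain j where "(i,j) \<in> P" by force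
    then show ?thesis using fg Pbd by metis
  qed
  have g1: "g j < n \<and> f (g j) = j" if "j < n" for j
  proof (cases "j = b")
    case True then show ?thesis using a by (simp add: f_def g_def)
  next
    case False
    then have "j \<in> snd ` P" using b that by auto
    then obtain i where "(i,j) \<in> P" by force
    then show ?thesis using fg Pbd by metis
  qed
  define \<phi> :: "nat+nat \<Rightarrow> nat+nat" where "\<phi> = case_sum (\<lambda>i. Inr (f i)) (\<lambda>j. Inl (g j))"
  have bij: "bij_betw \<phi> (Knm_vertices n n) (Knm_vertices n n)"
  proof (rule invol_bij, intro ballI)
    fix x assume "x \<in> Knm_vertices n n"
    then show "\<phi> x \<in> Knm_vertices n n \<and> \<phi> (\<phi> x) = x"
      by (cases x) (auto simp: \<phi>_def mem_V f1 g1)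
  qed
  have "graph_automorphism (Knm_vertices n n) (Knm_edges n n) \<phi>"
    by (rule auto_intro[OF bij]) (auto simp: \<phi>_def split: sum.splits)
  moreover have "\<forall>u v. {u, v} \<in> T \<longrightarrow> {\<phi> u, \<phi> v} = {u, v}"
  proof (intro allI impI)
    fix u v assume "{u,v} \<in> T"
    then obtain i j where ij: "(i,j) \<in> P" "{u,v} = {Inl i, Inr j}" using Tform by blast
    have "{\<phi> u, \<phi> v} = \<phi> ` {u,v}" by simp
    also have "\<dots> = {Inr (f i), Inl (g j)}" using ij(2) by (simp add: \<phi>_def)
    also have "\<dots> = {u,v}" using ij fg by auto
    finally show "{\<phi> u, \<phi> v} = {u, v}" .
  qed
  ultimately have "\<forall>x\<in>Knm_vertices n n. \<phi> x = x"
    using det unfolding edge_determining_set_def by blast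
  moreover have "Inl a \<in> Knm_vertices n n" using a by (simp add: mem_V)
  ultimately show False by (auto simp: \<phi>_def)
qed

lemma lower:
  assumes mn: "m \<le> n" "1 < m"
    and det: "edge_determining_set (Knm_vertices n m) (Knm_edges n m) T"
    and fin: "finite T"
    and lt: "card T < (if n \<noteq> m then n - 1 else n)"
  shows False
proof -
  define P where "P = {(i,j). {Inl i, Inr j} \<in> T}"
  define gm :: "nat \<times> nat \<Rightarrow> (nat+nat) set" where "gm = (\<lambda>(i,j). {Inl i, Inr j})"
  have TE: "T \<subseteq> Knm_edges n m" using det by (simp add: edge_determining_set_def)
  have Tform: "\<exists>i j. (i,j) \<in> P \<and> e = {Inl i, Inr j}" if "e \<in> T" for e
    using that TE P_def unfolding Knm_edges_def by blast
  have Pbd: "i < n \<and> j < m" if "(i,j) \<in> P" for i j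
    using that P_def TE edge_mem by blast
  have TP: "T = gm ` P"
    using Tform by (auto simp: gm_def P_def)
  have injg: "inj_on gm P" by (auto simp: inj_on_def gm_def doubleton_eq_iff)
  have finP: "finite P" using fin TP injg finite_imageD by blast
  have cP: "card P = card T" using TP injg card_image by metis
  have Lsub: "fst ` P \<subseteq> {..<n}" using Pbd by force
  have Rsub: "snd ` P \<subseteq> {..<m}" using Pbd by force
  have cL: "card (fst ` P) \<le> card P" using finP card_image_le by blast
  have cR: "card (snd ` P) \<le> card P" using finP card_image_le by blast
  show False
  proof (cases "card (fst ` P) + 2 \<le> n")
    case True
    then obtain a b where ab: "a < n" "b < n" "a \<noteq> b" "a \<notin> fst ` P" "b \<notin> fst ` P"
      using two_missing[OF Lsub] by blast
    have "\<forall>e\<in>T. Inl a \<notin> e \<and> Inl b \<notin> e"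
    proof
      fix e assume "e \<in> T"
      then obtain i j where "(i,j) \<in> P" "e = {Inl i, Inr j}" using Tform by blast
      then show "Inl a \<notin> e \<and> Inl b \<notin> e" using ab by force
    qed
    then show False using swap_left[OF det ab(1-3)] by blast
  next
    case F1: False
    show False
    proof (cases "card (snd ` P) + 2 \<le> m")
      case True
      then obtain a b where ab: "a < m" "b < m" "a \<noteq> b" "a \<notin> snd ` P" "b \<notin> snd ` P"
        using two_missing[OF Rsub] by blast
      have "\<forall>e\<in>T. Inr a \<notin> e \<and> Inr b \<notin> e"
      proof
        fix e assume "e \<in> T"
        then obtain i j where "(i,j) \<in> P" "e = {Inl i, Inr j}" using Tform by blast
        then show "Inr a \<notin> e \<and> Inr b \<notin> e" using ab by force
      qed
      then show False using swap_right[OF det ab(1-3)] by blast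
    next
      case F2: False
      show False
      proof (cases "n = m")
        case False
        then show False using F1 lt cL cP by auto
      next
        case nm: True
        have eqL: "card (fst ` P) = card P" "card P + 1 = n"
          using F1 lt cL cP nm by auto
        have eqR: "card (snd ` P) = card P"
          using F2 lt cR cP nm by auto
        have injf: "inj_on fst P" using eqL finP inj_on_iff_eq_card by blast
        have injs: "inj_on snd P" using eqR finP inj_on_iff_eq_card by blast
        obtain a where a: "a < n" "a \<notin> fst ` P" "\<forall>x<n. x \<noteq> a \<longrightarrow> x \<in> fst ` P"
          using one_missing[OF Lsub] eqL by auto
        obtain b where b: "b < n" "b \<notin> snd ` P" "\<forall>x<n. x \<noteq> b \<longrightarrow> x \<in> snd ` P"
          using one_missing[of "snd ` P" n] Rsub eqR eqL nm by auto
        have a2: "fst ` P = {..<n} - {a}" using a Lsub by auto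
        have b2: "snd ` P = {..<n} - {b}" using b Rsub nm by auto
        show False
          using flip_case[of n T P a b] det nm P_def injf injs a(1) a2 b(1) b2 by simp
      qed
    qed
  qed
qed

lemma pair_flip:
  assumes "{x, y} = {Inl i, Inr j}" "\<not> isl x"
  shows "x = Inr j \<and> y = Inl i"
  using assms by (auto simp: doubleton_eq_iff)

lemma pair_keep:
  assumes "{x, y} = {Inl i, Inr j}" "isl x"
  shows "x = Inl i \<and> y = Inr j"
  using assms by (auto simp: doubleton_eq_iff)

lemma upper:
  assumes mn: "m \<le> n" "1 < m"
    and kdef: "k = (if n \<noteq> m then n - 1 else n)"
  defines "T \<equiv> (\<lambda>i. {Inl i, Inr (min i (m - 2))}) ` {..<k}"
  shows "edge_determining_set (Knm_vertices n m) (Knm_edges n m) T \<and> finite T \<and> card T = k"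
proof -
  have kn: "k \<le> n" "n - 1 \<le> k" "m - 2 < k" using mn kdef by auto
  have inj: "inj_on (\<lambda>i. {Inl i, Inr (min i (m - 2))} :: (nat+nat) set) {..<k}"
    by (auto simp: inj_on_def doubleton_eq_iff)
  have card: "card T = k" unfolding T_def using card_image[OF inj] by simp
  have TE: "T \<subseteq> Knm_edges n m" unfolding T_def using kn mn by (auto simp: edge_mem)
  have det: "\<forall>x\<in>Knm_vertices n m. \<phi> x = x"
    if aut: "graph_automorphism (Knm_vertices n m) (Knm_edges n m) \<phi>"
      and fx: "\<forall>u v. {u, v} \<in> T \<longrightarrow> {\<phi> u, \<phi> v} = {u, v}" for \<phi>
  proof -
    have fixT: "{\<phi> (Inl i), \<phi> (Inr (min i (m-2)))} = {Inl i, Inr (min i (m-2))}" if "i < k" for i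
      using fx that unfolding T_def by blast
    have bij: "bij_betw \<phi> (Knm_vertices n m) (Knm_vertices n m)"
      using aut by (simp add: graph_automorphism_def)
    have inV: "\<phi> x \<in> Knm_vertices n m" if "x \<in> Knm_vertices n m" for x
      using bij that bij_betwE by blast
    have injV: "inj_on \<phi> (Knm_vertices n m)" using bij bij_betw_def by blast
    from side_cases[OF aut mn(1)] mn
    consider "\<forall>u\<in>Knm_vertices n m. isl (\<phi> u) = isl u"
      | "n = m" "\<forall>u\<in>Knm_vertices n m. isl (\<phi> u) \<noteq> isl u" by force
    then show ?thesis
    proof cases
      case 2
      have k: "k = n" using 2 kdef by simp
      have v1: "Inl (n-2) \<in> Knm_vertices n m" "Inl (n-1) \<in> Knm_vertices n m"
        using mn by (auto simp: mem_V)
      have e1: "\<phi> (Inr (n-2)) = Inl (n-2)"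
        using pair_flip[OF fixT[of "n-2"]] 2 v1 k mn by auto
      have e2: "\<phi> (Inr (n-2)) = Inl (n-1)"
        using pair_flip[OF fixT[of "n-1"]] 2 v1 k mn by auto
      show ?thesis using e1 e2 mn by simp
    next
      case 1
      have fl: "\<phi> (Inl i) = Inl i" if "i < k" for i
      proof -
        have "Inl i \<in> Knm_vertices n m" using that kn by (simp add: mem_V)
        then show ?thesis using pair_keep[OF fixT[OF that]] 1 by auto
      qed
      have fr: "\<phi> (Inr j) = Inr j" if "j \<le> m - 2" for j
      proof -
        have jk: "j < k" using that kn by simp
        have "Inl j \<in> Knm_vertices n m" using jk kn by (simp add: mem_V)
        then show ?thesis using pair_keep[OF fixT[OF jk]] 1 that by (auto simp: min_def)
      qed
      show ?thesis
      proof
        fix x assume xV: "x \<in> Knm_vertices n m"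
        show "\<phi> x = x"
        proof (cases x)
          case (Inl i)
          show ?thesis
          proof (cases "i < k")
            case True then show ?thesis using fl Inl by simp
          next
            case False
            have "isl (\<phi> x)" using 1 xV Inl by auto
            moreover have "\<phi> x \<in> Knm_vertices n m" using inV xV by blast
            ultimately obtain c where c: "\<phi> x = Inl c" "c < n"
              by (cases "\<phi> x") (auto simp: mem_V)
            show ?thesis
            proof (rule ccontr)
              assume "\<phi> x \<noteq> x"
              then have "c \<noteq> i" using c Inl by auto
              moreover have "i < n" using xV Inl by (simp add: mem_V)
              ultimately have "c < k" using False c kn by linarith
              then have "\<phi> (Inl c) = \<phi> x" using fl c by simp
              moreover have "Inl c \<in> Knm_vertices n m" using c by (simp add: mem_V)
              ultimately have "Inl c = x" using injV xV inj_on_def by metis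
              then show False using \<open>c \<noteq> i\<close> Inl by simp
            qed
          qed
        next
          case (Inr j)
          show ?thesis
          proof (cases "j \<le> m - 2")
            case True then show ?thesis using fr Inr by simp
          next
            case False
            have "\<not> isl (\<phi> x)" using 1 xV Inr by auto
            moreover have "\<phi> x \<in> Knm_vertices n m" using inV xV by blast
            ultimately obtain c where c: "\<phi> x = Inr c" "c < m"
              by (cases "\<phi> x") (auto simp: mem_V)
            show ?thesis
            proof (rule ccontr)
              assume "\<phi> x \<noteq> x"
              then have "c \<noteq> j" using c Inr by auto
              moreover have "j < m" using xV Inr by (simp add: mem_V)
              ultimately have "c \<le> m - 2" using False c by linarith
              then have "\<phi> (Inr c) = \<phi> x" using fr c by simp
              moreover have "Inr c \<in> Knm_vertices n m" using c by (simp add: mem_V)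
              ultimately have "Inr c = x" using injV xV inj_on_def by metis
              then show False using \<open>c \<noteq> j\<close> Inr by simp
            qed
          qed
        qed
      qed
    qed
  qed
  show ?thesis using det TE card unfolding edge_determining_set_def T_def by auto
qed

theorem theorem7:
  fixes n m :: nat
  assumes "n \<ge> m" and "m > 1"
  shows "determining_index (Knm_vertices n m) (Knm_edges n m) =
           (if n \<noteq> m then n - 1 else n)"
proof -
  define k where "k = (if n \<noteq> m then n - 1 else n)"
  obtain T where T: "edge_determining_set (Knm_vertices n m) (Knm_edges n m) T" "finite T" "card T = k"
    using upper[OF assms k_def] by blast
  have "(LEAST k. \<exists>T. edge_determining_set (Knm_vertices n m) (Knm_edges n m) T \<and> finite T \<and> card T = k) = k"
  proof (rule Least_equality)
    show "\<exists>T. edge_determining_set (Knm_vertices n m) (Knm_edges n m) T \<and> finite T \<and> card T = k"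
      using T by blast
  next
    fix y assume "\<exists>T. edge_determining_set (Knm_vertices n m) (Knm_edges n m) T \<and> finite T \<and> card T = y"
    then obtain T' where "edge_determining_set (Knm_vertices n m) (Knm_edges n m) T'" "finite T'" "card T' = y"
      by blast
    then show "k \<le> y" using lower[OF assms, of T'] k_def by (meson not_le)
  qed
  then show ?thesis unfolding determining_index_def k_def by simp
qed

end
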